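(* Consider the clipped GLM with sparsity prior described in the context. Let $a_n>0$ and let $\lambda_n$ satisfy Assumption $\mathcal{L}_0$, i.e. $\mathcal{M}(A,X)/d_n\le \lambda_n\le \mathcal{M}(A,X)\sqrt{\log d_n}$. Let $n,d_n\to\infty$ with $d_n>n$, let $\{b_n\}$ be a positive sequence with $b_n=o(n/\log d_n)$, and consider $n$ large enough that $b_n\log d_n<n$. Let the true parameter $\beta^*$ belong to $\mathcal{B}_{2,n}=\{\beta\in\mathbb{R}^{d_n}:0<|\mathrm{supp}(\beta)|\le b_n\}$. Then, with probability at least $1-(s_n^*\log d_n)^{-1}$ with respect to the data generating distribution (with parameter $\beta^*$), for all sufficiently large $n$ the marginal likelihood satisfies $$\int \exp\big(L_n(\eta,\eta^* )\big)\,\Pi_n(\beta)\,d\beta \;\gtrsim\; C_n\, d_n^{-(a_n+6)s_n^*}\exp(-\lambda_n\|\beta^*\|_1),$$ where $\gtrsim$ means $\ge$ up to a positive absolute constant.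
   Context: Exponential family: $f(y\mid\theta)=h(y)\exp[\theta T(y)-A(\theta)]$, $y\in\mathcal{Y}\subset\mathbb{R}$, with convex log-partition function $A$ such that $A''$ exists everywhere on the domain of $A$ and, for every $b\in(0,\infty]$, $\mathcal{I}_A(b):=\{t\in\mathbb{R}:0\le A''(t)\le b\}$ is an interval. Clipping function: there is a constant $\mathcal{M}_0(A)>0$ such that $\eta:\mathbb{R}\to\mathcal{I}_A(\mathcal{M}_0^2(A)/2)$ is Lipschitz and injective. Data: design matrix $X\in\mathbb{R}^{n\times d_n}$ with rows $x_i^{\mathrm T}$; for $\beta\in\mathbb{R}^{d_n}$ put $\eta_i=\eta(x_i^{\mathrm T}\beta)$, and for the true parameter $\beta^*$ put $\eta_i^*=\eta(x_i^{\mathrm T}\beta^* )$. Observations $y_1,\dots,y_n$ are independent with densities $h(y_i)\exp(T_i\eta_i^*-A(\eta_i^* ))$, $T_i=T(y_i)$. Define $\mathcal{D}_n(\eta^*\|\eta)=\sum_{i=1}^n[A(\eta_i)-A(\eta_i^* )-(\eta_i-\eta_i^* )A'(\eta_i^* )]$, $Z_n(\eta,\eta^* )=\sum_{i=1}^n (T_i-\mathbb{E}T_i)(\eta_i-\eta_i^* )$, and $L_n(\eta,\eta^* )=Z_n(\eta,\eta^* )-\mathcal{D}_n(\eta^*\|\eta)$. $S^*=\mathrm{supp}(\beta^* )$ (set of nonzero coordinates) and $s_n^*=|S^*|$. Prior: for $S\subset\{1,\dots,d_n\}$, $\beta_S$ denotes $\beta$ with coordinates in $S^c$ set to zero, and $$\Pi_n(S,\beta)=C_n\binom{d_n}{|S|}^{-1}\Big(\frac{\lambda_n}{2d_n^{a_n}}\Big)^{|S|}\exp(-\lambda_n\|\beta_S\|_1)\,\delta_0(\beta_{S^c}),$$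 with hyperparameters $a_n>0,\lambda_n>0$, $C_n$ the normalizing constant of the model-size weights $\omega_n(s)=C_nd_n^{-a_ns}$, $s=0,\dots,d_n$, and $\Pi_n(\beta)=\sum_S\Pi_n(S,\beta)$. Constants: $\|X\|_{(\infty,\infty)}:=\max\{X_{i,j}:1\le i\le n,1\le j\le d_n\}$, $\mathcal{M}_1(A):=(1\wedge\mathcal{M}_0^{-1}(A))^{-1}$, $\mathcal{M}(A,X):=\|X\|_{(\infty,\infty)}\mathcal{M}_1(A)$. *)

theory Defs
  imports "HOL-Probability.Probability" "HOL-Library.Landau_Symbols"
begin

definition fam_density :: "(real \<Rightarrow> real) \<Rightarrow> (real \<Rightarrow> real) \<Rightarrow> (real \<Rightarrow> real) \<Rightarrow> real \<Rightarrow> real \<Rightarrow> real" where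
  "fam_density h T A \<theta> y = h y * exp (\<theta> * T y - A \<theta>)"

definition nat_param :: "real measure \<Rightarrow> (real \<Rightarrow> real) \<Rightarrow> (real \<Rightarrow> real) \<Rightarrow> real set" where
  "nat_param \<mu> h T = {\<theta>. integrable \<mu> (\<lambda>y. h y * exp (\<theta> * T y))}"

definition expfam_ok ::
  "real measure \<Rightarrow> (real \<Rightarrow> real) \<Rightarrow> (real \<Rightarrow> real) \<Rightarrow> (real \<Rightarrow> real) \<Rightarrow> (real \<Rightarrow> real) \<Rightarrow> (real \<Rightarrow> real) \<Rightarrow> bool" where
  "expfam_ok \<mu> h T A A1 A2 \<longleftrightarrow>
     sets \<mu> = sets borel \<and> h \<in> borel_measurable \<mu> \<and> T \<in> borel_measurable \<mu> \<and> (\<forall>y. 0 \<le> h y) \<and>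
     (\<forall>\<theta>\<in>nat_param \<mu> h T. (\<integral>y. h y * exp (\<theta> * T y) \<partial>\<mu>) = exp (A \<theta>)) \<and>
     convex_on (nat_param \<mu> h T) A \<and>
     (\<forall>t\<in>nat_param \<mu> h T. (A has_real_derivative A1 t) (at t within nat_param \<mu> h T) \<and>
                             (A1 has_real_derivative A2 t) (at t within nat_param \<mu> h T)) \<and>
     (\<forall>b>0. is_interval {t\<in>nat_param \<mu> h T. 0 \<le> A2 t \<and> A2 t \<le> b}) \<and>
     is_interval {t\<in>nat_param \<mu> h T. 0 \<le> A2 t}"

definition I_A :: "real measure \<Rightarrow> (real \<Rightarrow> real) \<Rightarrow> (real \<Rightarrow> real) \<Rightarrow> (real \<Rightarrow> real) \<Rightarrow> real \<Rightarrow> real set" where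
  "I_A \<mu> h T A2 b = {t\<in>nat_param \<mu> h T. 0 \<le> A2 t \<and> A2 t \<le> b}"

definition clip_ok ::
  "real measure \<Rightarrow> (real \<Rightarrow> real) \<Rightarrow> (real \<Rightarrow> real) \<Rightarrow> (real \<Rightarrow> real) \<Rightarrow> real \<Rightarrow> (real \<Rightarrow> real) \<Rightarrow> bool" where
  "clip_ok \<mu> h T A2 M0 \<eta> \<longleftrightarrow> 0 < M0 \<and> (\<forall>x. \<eta> x \<in> I_A \<mu> h T A2 (M0\<^sup>2 / 2)) \<and>
     (\<exists>L. lipschitz_on L UNIV \<eta>) \<and> inj \<eta>"

definition lin_pred :: "(nat \<Rightarrow> nat \<Rightarrow> real) \<Rightarrow> nat \<Rightarrow> (nat \<Rightarrow> real) \<Rightarrow> nat \<Rightarrow> real" where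
  "lin_pred X d \<beta> i = (\<Sum>j<d. X i j * \<beta> j)"

definition obs_dist :: "real measure \<Rightarrow> (real \<Rightarrow> real) \<Rightarrow> (real \<Rightarrow> real) \<Rightarrow> (real \<Rightarrow> real) \<Rightarrow> real \<Rightarrow> real measure" where
  "obs_dist \<mu> h T A \<theta> = density \<mu> (\<lambda>y. ennreal (fam_density h T A \<theta> y))"

text \<open>Joint law of the independent observations y_1..y_n (indexed 0..n-1) under beta*.\<close>
definition data_dist ::
  "real measure \<Rightarrow> (real \<Rightarrow> real) \<Rightarrow> (real \<Rightarrow> real) \<Rightarrow> (real \<Rightarrow> real) \<Rightarrow> (real \<Rightarrow> real)
   \<Rightarrow> (nat \<Rightarrow> nat \<Rightarrow> real) \<Rightarrow> nat \<Rightarrow> nat \<Rightarrow> (nat \<Rightarrow> real) \<Rightarrow> (nat \<Rightarrow> real) measure" where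
  "data_dist \<mu> h T A \<eta> X n d \<beta>s =
     PiM {..<n} (\<lambda>i. obs_dist \<mu> h T A (\<eta> (lin_pred X d \<beta>s i)))"

definition Ln ::
  "real measure \<Rightarrow> (real \<Rightarrow> real) \<Rightarrow> (real \<Rightarrow> real) \<Rightarrow> (real \<Rightarrow> real) \<Rightarrow> (real \<Rightarrow> real) \<Rightarrow> (real \<Rightarrow> real)
   \<Rightarrow> (nat \<Rightarrow> nat \<Rightarrow> real) \<Rightarrow> nat \<Rightarrow> nat \<Rightarrow> (nat \<Rightarrow> real) \<Rightarrow> (nat \<Rightarrow> real) \<Rightarrow> (nat \<Rightarrow> real) \<Rightarrow> real" where
  "Ln \<mu> h T A A1 \<eta> X n d \<beta>s \<beta> y =
     (let e = (\<lambda>i. \<eta> (lin_pred X d \<beta> i)); es = (\<lambda>i. \<eta> (lin_pred X d \<beta>s i));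
          ET = (\<lambda>i. integral\<^sup>L (obs_dist \<mu> h T A (es i)) T);
          Z = (\<Sum>i<n. (T (y i) - ET i) * (e i - es i));
          D = (\<Sum>i<n. A (e i) - A (es i) - (e i - es i) * A1 (es i))
      in Z - D)"

text \<open>Prior. Normalising constant C_n of the model-size weights omega_n(s) = C_n d^(-a s).\<close>
definition C_norm :: "nat \<Rightarrow> real \<Rightarrow> real" where
  "C_norm d a = 1 / (\<Sum>s\<le>d. real d powr (- a * real s))"

definition laplace_density :: "real \<Rightarrow> real \<Rightarrow> real" where
  "laplace_density lam x = lam / 2 * exp (- lam * \<bar>x\<bar>)"

definition coord_prior :: "real \<Rightarrow> nat set \<Rightarrow> nat \<Rightarrow> real measure" where
  "coord_prior lam S j = (if j \<in> S then density lborel (\<lambda>x. ennreal (laplace_density lam x))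
                          else return lborel 0)"

text \<open>Pi_n(S, beta) = C_n binom(d,|S|)^(-1) d^(-a|S|) * (lam/2)^|S| exp(-lam ||beta_S||_1) delta_0(beta_{S^c});
  the model weight is the part not absorbed in the Laplace densities.\<close>
definition model_weight :: "nat \<Rightarrow> real \<Rightarrow> nat set \<Rightarrow> real" where
  "model_weight d a S = C_norm d a / real (d choose card S) * real d powr (- a * real (card S))"

definition prior_integral :: "nat \<Rightarrow> real \<Rightarrow> real \<Rightarrow> ((nat \<Rightarrow> real) \<Rightarrow> ennreal) \<Rightarrow> ennreal" where
  "prior_integral d a lam g =
     (\<Sum>S\<in>Pow {..<d}. ennreal (model_weight d a S) *
        (\<integral>\<^sup>+ \<beta>. g \<beta> \<partial>(PiM {..<d} (coord_prior lam S))))"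

definition Xnorm :: "(nat \<Rightarrow> nat \<Rightarrow> real) \<Rightarrow> nat \<Rightarrow> nat \<Rightarrow> real" where
  "Xnorm X n d = Max {\<bar>X i j\<bar> | i j. i < n \<and> j < d}"

definition M1 :: "real \<Rightarrow> real" where
  "M1 M0 = inverse (min 1 (inverse M0))"

definition M_AX :: "real \<Rightarrow> (nat \<Rightarrow> nat \<Rightarrow> real) \<Rightarrow> nat \<Rightarrow> nat \<Rightarrow> real" where
  "M_AX M0 X n d = Xnorm X n d * M1 M0"

end

theory Submission imports Defs begin

lemma range_open_interval:
  fixes \<eta> :: "real \<Rightarrow> real"
  assumes "lipschitz_on L UNIV \<eta>" "inj \<eta>"
  shows "open (range \<eta>)" "is_interval (range \<eta>)"
proof -
  have c: "continuous_on UNIV \<eta>" using assms(1) by (rule lipschitz_on_continuous_on)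
  show "open (range \<eta>)" using invariance_of_domain[OF c open_UNIV] assms(2) by simp
  show "is_interval (range \<eta>)"
    using connected_continuous_image[OF c connected_UNIV] is_interval_connected_1 by blast
qed

lemma taylor_bound:
  fixes A A1 A2 :: "real \<Rightarrow> real"
  assumes U: "is_interval U"
    and d1: "\<And>t. t \<in> U \<Longrightarrow> (A has_real_derivative A1 t) (at t)"
    and d2: "\<And>t. t \<in> U \<Longrightarrow> (A1 has_real_derivative A2 t) (at t)"
    and bd: "\<And>t. t \<in> U \<Longrightarrow> A2 t \<le> B"
    and x: "x \<in> U" and y: "y \<in> U"
  shows "A y - A x - (y - x) * A1 x \<le> B * (y - x)\<^sup>2 / 2"
proof (cases "x = y")
  case True then show ?thesis by simp
next
  case False
  define diff where "diff = (\<lambda>m::nat. if m = 0 then A else if m = 1 then A1 else A2)"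
  have seg: "t \<in> U" if "min x y \<le> t" "t \<le> max x y" for t
  proof (cases "x \<le> y")
    case True
    then show ?thesis using U x y that unfolding is_interval_1 by (metis max.absorb2 min.absorb1)
  next
    case False
    then show ?thesis using U x y that unfolding is_interval_1 by (metis max.absorb1 min.absorb2 nle_le)
  qed
  have D: "\<forall>m t. m < 2 \<and> min x y \<le> t \<and> t \<le> max x y \<longrightarrow> DERIV (diff m) t :> diff (Suc m) t"
  proof (intro allI impI)
    fix m t assume "m < (2::nat) \<and> min x y \<le> t \<and> t \<le> max x y"
    then have "m = 0 \<or> m = 1" "t \<in> U" using seg by auto
    then show "DERIV (diff m) t :> diff (Suc m) t" using d1 d2 by (auto simp: diff_def)
  qed
  obtain t where t: "(if y < x then y < t \<and> t < x else x < t \<and> t < y)"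
    and eq: "A y = (\<Sum>m<2. (diff m x / fact m) * (y - x)^m) + (diff 2 t / fact 2) * (y - x)^2"
    using Taylor[of 2 diff A "min x y" "max x y" x y] D False by (auto simp: diff_def)
  have "t \<in> U" using seg t by (auto split: if_splits)
  then have "A2 t \<le> B" by (rule bd)
  moreover have "A y = A x + A1 x * (y - x) + A2 t / 2 * (y - x)^2"
    using eq by (simp add: diff_def numeral_2_eq_2 lessThan_Suc)
  ultimately show ?thesis
  proof -
    assume a: "A2 t \<le> B" and b: "A y = A x + A1 x * (y - x) + A2 t / 2 * (y - x)^2"
    have "A2 t / 2 * (y - x)^2 \<le> B / 2 * (y - x)^2"
      using a by (intro mult_right_mono) auto
    then show ?thesis using b by (simp add: algebra_simps)
  qed
qed

lemma expfam_okD: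
  assumes "expfam_ok \<mu> h T A A1 A2"
  shows "sets \<mu> = sets borel" "h \<in> borel_measurable \<mu>" "T \<in> borel_measurable \<mu>" "\<And>y. 0 \<le> h y"
    "\<And>\<theta>. \<theta>\<in>nat_param \<mu> h T \<Longrightarrow> (\<integral>y. h y * exp (\<theta> * T y) \<partial>\<mu>) = exp (A \<theta>)"
    "\<And>t. t\<in>nat_param \<mu> h T \<Longrightarrow> (A has_real_derivative A1 t) (at t within nat_param \<mu> h T)"
    "\<And>t. t\<in>nat_param \<mu> h T \<Longrightarrow> (A1 has_real_derivative A2 t) (at t within nat_param \<mu> h T)"
  using assms unfolding expfam_ok_def by blast+

lemma nn_hexp:
  assumes ok: "expfam_ok \<mu> h T A A1 A2" and th: "\<theta> \<in> nat_param \<mu> h T"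
  shows "(\<integral>\<^sup>+ y. ennreal (h y * exp (\<theta> * T y)) \<partial>\<mu>) = ennreal (exp (A \<theta>))"
proof -
  note hp = expfam_okD(4)[OF ok]
  have eq: "(\<integral>y. h y * exp (\<theta> * T y) \<partial>\<mu>) = exp (A \<theta>)" using expfam_okD(5)[OF ok th] .
  have int: "integrable \<mu> (\<lambda>y. h y * exp (\<theta> * T y))" using th unfolding nat_param_def by simp
  have "(\<integral>\<^sup>+ y. ennreal (h y * exp (\<theta> * T y)) \<partial>\<mu>) = ennreal (\<integral>y. h y * exp (\<theta> * T y) \<partial>\<mu>)"
    by (rule nn_integral_eq_integral[OF int]) (simp add: hp)
  then show ?thesis using eq by simp
qed

lemma obs_meas:
  assumes ok: "expfam_ok \<mu> h T A A1 A2"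
  shows "T \<in> borel_measurable (obs_dist \<mu> h T A \<theta>)" "sets (obs_dist \<mu> h T A \<theta>) = sets borel"
    "space (obs_dist \<mu> h T A \<theta>) = UNIV"
proof -
  note s = expfam_okD(1)[OF ok] and Tm = expfam_okD(3)[OF ok]
  show s2: "sets (obs_dist \<mu> h T A \<theta>) = sets borel" unfolding obs_dist_def using s by simp
  then show "space (obs_dist \<mu> h T A \<theta>) = UNIV" by (metis sets_eq_imp_space_eq space_borel)
  show "T \<in> borel_measurable (obs_dist \<mu> h T A \<theta>)" using Tm measurable_cong_sets[OF s2[unfolded s[symmetric]] refl[of "sets borel"]] by metis
qed

lemma nn_obs:
  assumes ok: "expfam_ok \<mu> h T A A1 A2" and f: "f \<in> borel_measurable borel"
  shows "(\<integral>\<^sup>+ y. f y \<partial>obs_dist \<mu> h T A \<theta>) = (\<integral>\<^sup>+ y. ennreal (fam_density h T A \<theta> y) * f y \<partial>\<mu>)"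
proof -
  note s = expfam_okD(1)[OF ok] and Tm = expfam_okD(3)[OF ok] and hm = expfam_okD(2)[OF ok]
  have f': "f \<in> borel_measurable \<mu>" using f measurable_cong_sets[OF s refl[of "sets borel"]] by metis
  show ?thesis unfolding obs_dist_def
  proof (rule nn_integral_density)
    note [measurable] = hm Tm f'
    show "(\<lambda>y. ennreal (fam_density h T A \<theta> y)) \<in> borel_measurable \<mu>"
      unfolding fam_density_def by measurable
  qed (rule f')
qed

lemma mgf:
  assumes ok: "expfam_ok \<mu> h T A A1 A2" and th: "\<theta> \<in> nat_param \<mu> h T"
    and th2: "\<theta> + t \<in> nat_param \<mu> h T"
  shows "(\<integral>\<^sup>+ y. ennreal (exp (t * (T y - m))) \<partial>obs_dist \<mu> h T A \<theta>) = ennreal (exp (A (\<theta> + t) - A \<theta> - t * m))"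
proof -
  note s = expfam_okD(1)[OF ok] and Tm = expfam_okD(3)[OF ok] and hm = expfam_okD(2)[OF ok]
    and hp = expfam_okD(4)[OF ok]
  have Tb: "T \<in> borel_measurable borel" using Tm measurable_cong_sets[OF s refl[of "sets borel"]] by metis
  have "(\<integral>\<^sup>+ y. ennreal (exp (t * (T y - m))) \<partial>obs_dist \<mu> h T A \<theta>)
      = (\<integral>\<^sup>+ y. ennreal (fam_density h T A \<theta> y) * ennreal (exp (t * (T y - m))) \<partial>\<mu>)"
    using Tb by (intro nn_obs[OF ok]) simp
  also have "\<dots> = (\<integral>\<^sup>+ y. ennreal (exp (- A \<theta> - t * m)) * ennreal (h y * exp ((\<theta> + t) * T y)) \<partial>\<mu>)"
  proof (rule nn_integral_cong)
    fix y
    have "fam_density h T A \<theta> y * exp (t * (T y - m)) = exp (- A \<theta> - t * m) * (h y * exp ((\<theta> + t) * T y))"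
    proof -
      have "exp (\<theta> * T y - A \<theta>) * exp (t * (T y - m)) = exp (- A \<theta> - t * m) * exp ((\<theta> + t) * T y)"
        unfolding exp_add[symmetric] by (simp add: algebra_simps)
      then show ?thesis unfolding fam_density_def by (metis mult.assoc mult.left_commute)
    qed
    have fp: "0 \<le> fam_density h T A \<theta> y" unfolding fam_density_def using hp[of y] by simp
    have "ennreal (fam_density h T A \<theta> y) * ennreal (exp (t * (T y - m))) =
        ennreal (fam_density h T A \<theta> y * exp (t * (T y - m)))"
      using fp by (rule ennreal_mult'[symmetric])
    also have "\<dots> = ennreal (exp (- A \<theta> - t * m)) * ennreal (h y * exp ((\<theta> + t) * T y))"
      unfolding \<open>fam_density h T A \<theta> y * exp (t * (T y - m)) = _\<close> by (rule ennreal_mult') simp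
    finally show "ennreal (fam_density h T A \<theta> y) * ennreal (exp (t * (T y - m))) =
        ennreal (exp (- A \<theta> - t * m)) * ennreal (h y * exp ((\<theta> + t) * T y))" .
  qed
  also have "\<dots> = ennreal (exp (- A \<theta> - t * m)) * (\<integral>\<^sup>+ y. ennreal (h y * exp ((\<theta> + t) * T y)) \<partial>\<mu>)"
  proof (rule nn_integral_cmult)
    note [measurable] = hm Tm
    show "(\<lambda>y. ennreal (h y * exp ((\<theta> + t) * T y))) \<in> borel_measurable \<mu>" by measurable
  qed
  also have "\<dots> = ennreal (exp (- A \<theta> - t * m)) * ennreal (exp (A (\<theta> + t)))"
    using nn_hexp[OF ok th2] by simp
  also have "\<dots> = ennreal (exp (A (\<theta> + t) - A \<theta> - t * m))"
  proof -
    have "exp (- A \<theta> - t * m) * exp (A (\<theta> + t)) = exp (A (\<theta> + t) - A \<theta> - t * m)"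
      unfolding exp_add[symmetric] by (simp add: algebra_simps)
    then show ?thesis by (metis ennreal_mult' exp_ge_zero)
  qed
  finally show ?thesis .
qed

lemma prob_obs:
  assumes ok: "expfam_ok \<mu> h T A A1 A2" and th: "\<theta> \<in> nat_param \<mu> h T"
  shows "prob_space (obs_dist \<mu> h T A \<theta>)"
proof
  have "emeasure (obs_dist \<mu> h T A \<theta>) (space (obs_dist \<mu> h T A \<theta>))
     = (\<integral>\<^sup>+ y. ennreal (exp (0 * (T y - 0))) \<partial>obs_dist \<mu> h T A \<theta>)"
    using obs_meas[OF ok] by simp
  also have "\<dots> = 1" using mgf[OF ok th, of 0 0] th by simp
  finally show "emeasure (obs_dist \<mu> h T A \<theta>) (space (obs_dist \<mu> h T A \<theta>)) = 1" .
qed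


lemma cosh_sq: "(x::real)\<^sup>2 / 2 + 2 \<le> exp x + exp (- x)"
proof -
  have *: "y\<^sup>2 / 2 + 2 \<le> exp y + exp (- y)" if "0 \<le> y" for y :: real
    using exp_lower_Taylor_quadratic[OF that] exp_ge_add_one_self[of "-y"] by simp
  show ?thesis
  proof (cases "0 \<le> x")
    case True then show ?thesis by (rule *)
  next
    case False then show ?thesis using *[of "-x"] by simp
  qed
qed

lemma second_moment:
  assumes ok: "expfam_ok \<mu> h T A A1 A2"
    and U: "open U" "is_interval U" "U \<subseteq> nat_param \<mu> h T"
    and d1: "\<And>t. t \<in> U \<Longrightarrow> (A has_real_derivative A1 t) (at t)"
    and d2: "\<And>t. t \<in> U \<Longrightarrow> (A1 has_real_derivative A2 t) (at t)"
    and bd: "\<And>t. t \<in> U \<Longrightarrow> A2 t \<le> B" and B: "0 < B"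
    and th: "\<theta> \<in> U"
  shows "(\<integral>\<^sup>+ y. ennreal ((T y - A1 \<theta>)\<^sup>2) \<partial>obs_dist \<mu> h T A \<theta>) \<le> ennreal (2 * exp 1 * B)"
proof -
  define m where "m = A1 \<theta>"
  obtain e where e: "e > 0" "ball \<theta> e \<subseteq> U" using U(1) th open_contains_ball by blast
  define t where "t = min (e / 2) (1 / sqrt B)"
  have t0: "0 < t" using e B unfolding t_def by simp
  have tB: "B * t\<^sup>2 \<le> 1"
  proof -
    have "t\<^sup>2 \<le> (1 / sqrt B)\<^sup>2" unfolding t_def using t0 e B
      by (intro power_mono) (auto simp: t_def)
    then have "B * t\<^sup>2 \<le> B * (1 / sqrt B)\<^sup>2" using B by (intro mult_left_mono) auto
    also have "\<dots> = 1" using B by (simp add: power_divide)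
    finally show ?thesis .
  qed
  have tp: "\<theta> + t \<in> U" and tm: "\<theta> + (- t) \<in> U"
    using e t0 unfolding t_def by (auto intro!: subsetD[OF e(2)] simp: dist_real_def)
  have thN: "\<theta> \<in> nat_param \<mu> h T" using th U by auto
  define p where "p = B * t\<^sup>2 / 2"
  have qp: "A (\<theta> + t) - A \<theta> - t * m \<le> p"
    using taylor_bound[OF U(2) d1 d2 bd th tp] unfolding p_def m_def by simp
  have qm: "A (\<theta> + (- t)) - A \<theta> - (- t) * m \<le> p"
    using taylor_bound[OF U(2) d1 d2 bd th tm] unfolding p_def m_def by simp
  have p01: "0 \<le> p" "p \<le> 1" using tB B unfolding p_def by auto
  have ep: "exp p \<le> 1 + exp 1 * p"
  proof -
    have "exp p \<le> 1 + p * exp p"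
      using exp_ge_add_one_self[of "-p"] p01 by (simp add: exp_minus field_simps)
    also have "\<dots> \<le> 1 + p * exp 1" using p01 by (intro add_left_mono mult_left_mono) auto
    finally show ?thesis by (simp add: mult.commute)
  qed
  note Tm = obs_meas(1)[OF ok]
  note [measurable] = Tm
  let ?O = "obs_dist \<mu> h T A \<theta>"
  interpret P: prob_space ?O by (rule prob_obs[OF ok thN])
  have "(\<integral>\<^sup>+ y. ennreal (t\<^sup>2 / 2 * (T y - m)\<^sup>2 + 2) \<partial>?O)
      \<le> (\<integral>\<^sup>+ y. ennreal (exp (t * (T y - m))) + ennreal (exp ((- t) * (T y - m))) \<partial>?O)"
  proof (rule nn_integral_mono)
    fix y
    have "t\<^sup>2 / 2 * (T y - m)\<^sup>2 + 2 \<le> exp (t * (T y - m)) + exp (- (t * (T y - m)))"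
      using cosh_sq[of "t * (T y - m)"] by (simp add: power_mult_distrib)
    then show "ennreal (t\<^sup>2 / 2 * (T y - m)\<^sup>2 + 2) \<le> ennreal (exp (t * (T y - m))) + ennreal (exp ((- t) * (T y - m)))"
      by (simp add: ennreal_plus[symmetric] del: ennreal_plus)
  qed
  also have "\<dots> = (\<integral>\<^sup>+ y. ennreal (exp (t * (T y - m))) \<partial>?O) + (\<integral>\<^sup>+ y. ennreal (exp ((- t) * (T y - m))) \<partial>?O)"
    by (rule nn_integral_add) measurable
  also have "\<dots> = ennreal (exp (A (\<theta> + t) - A \<theta> - t * m)) + ennreal (exp (A (\<theta> + (- t)) - A \<theta> - (- t) * m))"
  proof -
    have a: "\<theta> + t \<in> nat_param \<mu> h T" "\<theta> + - t \<in> nat_param \<mu> h T" using tp tm U(3) by auto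
    show ?thesis using mgf[OF ok thN a(1), of m] mgf[OF ok thN a(2), of m] by simp
  qed
  also have "\<dots> \<le> ennreal (exp p) + ennreal (exp p)"
    using qp qm by (intro add_mono ennreal_leI) auto
  also have "\<dots> = ennreal (2 * exp p)" by (simp add: ennreal_plus[symmetric] del: ennreal_plus)
  finally have L: "(\<integral>\<^sup>+ y. ennreal (t\<^sup>2 / 2 * (T y - m)\<^sup>2 + 2) \<partial>?O) \<le> ennreal (2 * exp p)" .
  have "(\<integral>\<^sup>+ y. ennreal (t\<^sup>2 / 2 * (T y - m)\<^sup>2 + 2) \<partial>?O)
      = (\<integral>\<^sup>+ y. ennreal (t\<^sup>2 / 2) * ennreal ((T y - m)\<^sup>2) + ennreal 2 \<partial>?O)"
  proof (intro nn_integral_cong)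
    fix y
    have "ennreal (t\<^sup>2 / 2 * (T y - m)\<^sup>2 + 2) = ennreal (t\<^sup>2 / 2 * (T y - m)\<^sup>2) + ennreal 2"
      by (rule ennreal_plus) auto
    also have "ennreal (t\<^sup>2 / 2 * (T y - m)\<^sup>2) = ennreal (t\<^sup>2 / 2) * ennreal ((T y - m)\<^sup>2)"
      by (rule ennreal_mult) auto
    finally show "ennreal (t\<^sup>2 / 2 * (T y - m)\<^sup>2 + 2) = ennreal (t\<^sup>2 / 2) * ennreal ((T y - m)\<^sup>2) + ennreal 2" .
  qed
  also have "\<dots> = ennreal (t\<^sup>2 / 2) * (\<integral>\<^sup>+ y. ennreal ((T y - m)\<^sup>2) \<partial>?O) + ennreal 2"
    by (subst nn_integral_add) (auto simp: nn_integral_cmult P.emeasure_space_1)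
  finally have L2: "ennreal (t\<^sup>2 / 2) * (\<integral>\<^sup>+ y. ennreal ((T y - m)\<^sup>2) \<partial>?O) + ennreal 2 \<le> ennreal (2 * exp p)"
    using L by simp
  define I where "I = (\<integral>\<^sup>+ y. ennreal ((T y - m)\<^sup>2) \<partial>?O)"
  have "I \<noteq> \<top>"
  proof
    assume "I = \<top>"
    then show False using L2 t0 unfolding I_def[symmetric] by (simp add: ennreal_mult_top top_unique)
  qed
  then obtain r where r: "I = ennreal r" "0 \<le> r" by (cases I) auto
  have e1: "ennreal (t\<^sup>2 / 2 * r + 2) = ennreal (t\<^sup>2 / 2) * ennreal r + ennreal 2"
    using r(2) ennreal_plus[of "t\<^sup>2 / 2 * r" 2] ennreal_mult[of "t\<^sup>2 / 2" r] by simp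
  have "ennreal (t\<^sup>2 / 2 * r + 2) \<le> ennreal (2 * exp p)"
    unfolding e1 using L2 r unfolding I_def[symmetric] by simp
  then have "t\<^sup>2 / 2 * r + 2 \<le> 2 * exp p" by (subst (asm) ennreal_le_iff) auto
  then have "t\<^sup>2 / 2 * r \<le> 2 * exp 1 * p" using ep by simp
  then have "t\<^sup>2 * r \<le> t\<^sup>2 * (2 * exp 1 * B)" unfolding p_def by (simp add: field_simps)
  then have "r \<le> 2 * exp 1 * B" using t0 by (simp add: mult_le_cancel_left)
  then show ?thesis using r unfolding I_def m_def by (simp add: ennreal_leI)
qed


lemma abs_moment:
  assumes ok: "expfam_ok \<mu> h T A A1 A2"
    and U: "open U" "is_interval U" "U \<subseteq> nat_param \<mu> h T"
    and d1: "\<And>t. t \<in> U \<Longrightarrow> (A has_real_derivative A1 t) (at t)"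
    and d2: "\<And>t. t \<in> U \<Longrightarrow> (A1 has_real_derivative A2 t) (at t)"
    and bd: "\<And>t. t \<in> U \<Longrightarrow> A2 t \<le> B" and B: "0 < B"
    and th: "\<theta> \<in> U"
  shows "(\<integral>\<^sup>+ y. ennreal \<bar>T y - (\<integral>z. T z \<partial>obs_dist \<mu> h T A \<theta>)\<bar> \<partial>obs_dist \<mu> h T A \<theta>)
          \<le> ennreal (2 * (1 + 2 * exp 1 * B))"
proof -
  define m where "m = A1 \<theta>"
  define K0 where "K0 = 1 + 2 * exp 1 * B"
  let ?O = "obs_dist \<mu> h T A \<theta>"
  have thN: "\<theta> \<in> nat_param \<mu> h T" using th U by auto
  interpret P: prob_space ?O by (rule prob_obs[OF ok thN])
  note Tm = obs_meas(1)[OF ok]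
  note [measurable] = Tm
  have sm: "(\<integral>\<^sup>+ y. ennreal ((T y - m)\<^sup>2) \<partial>?O) \<le> ennreal (2 * exp 1 * B)"
    unfolding m_def by (rule second_moment[OF ok U d1 d2 bd B th])
  have a: "(\<integral>\<^sup>+ y. ennreal \<bar>T y - m\<bar> \<partial>?O) \<le> ennreal K0"
  proof -
    have "(\<integral>\<^sup>+ y. ennreal \<bar>T y - m\<bar> \<partial>?O) \<le> (\<integral>\<^sup>+ y. ennreal 1 + ennreal ((T y - m)\<^sup>2) \<partial>?O)"
    proof (rule nn_integral_mono)
      fix y
      have "\<bar>T y - m\<bar> \<le> 1 + (T y - m)\<^sup>2"
      proof (cases "\<bar>T y - m\<bar> \<le> 1")
        case True then show ?thesis by (simp add: add_increasing2)
      next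
        case False
        then have "\<bar>T y - m\<bar> * 1 \<le> \<bar>T y - m\<bar> * \<bar>T y - m\<bar>" by (intro mult_left_mono) auto
        then show ?thesis by (simp add: power2_eq_square abs_mult_self_eq)
      qed
      then show "ennreal \<bar>T y - m\<bar> \<le> ennreal 1 + ennreal ((T y - m)\<^sup>2)"
        using ennreal_plus[of 1 "(T y - m)\<^sup>2"] by (metis ennreal_leI zero_le_one zero_le_power2)
    qed
    also have "\<dots> = ennreal 1 + (\<integral>\<^sup>+ y. ennreal ((T y - m)\<^sup>2) \<partial>?O)"
      by (subst nn_integral_add) (auto simp: P.emeasure_space_1)
    also have "\<dots> \<le> ennreal 1 + ennreal (2 * exp 1 * B)" using sm by (intro add_left_mono)
    also have "\<dots> = ennreal K0" unfolding K0_def using B by (subst ennreal_plus) auto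
    finally show ?thesis .
  qed
  have intd: "integrable ?O (\<lambda>y. T y - m)"
  proof (rule integrableI_bounded)
    show "(\<lambda>y. T y - m) \<in> borel_measurable ?O" by measurable
    have "(\<integral>\<^sup>+ y. ennreal (norm (T y - m)) \<partial>?O) \<le> ennreal K0" using a by simp
    also have "\<dots> < \<infinity>" by simp
    finally show "(\<integral>\<^sup>+ y. ennreal (norm (T y - m)) \<partial>?O) < \<infinity>" .
  qed
  have intT: "integrable ?O T"
  proof -
    have "integrable ?O (\<lambda>y. (T y - m) + m)" using intd by (intro Bochner_Integration.integrable_add) auto
    then show ?thesis by simp
  qed
  have intabs: "integrable ?O (\<lambda>y. \<bar>T y - m\<bar>)" using intd by (rule integrable_abs)
  have c: "(\<integral>y. \<bar>T y - m\<bar> \<partial>?O) \<le> K0"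
  proof -
    have "ennreal (\<integral>y. \<bar>T y - m\<bar> \<partial>?O) = (\<integral>\<^sup>+ y. ennreal \<bar>T y - m\<bar> \<partial>?O)"
      by (rule nn_integral_eq_integral[OF intabs, symmetric]) auto
    then have "ennreal (\<integral>y. \<bar>T y - m\<bar> \<partial>?O) \<le> ennreal K0" using a by simp
    then show ?thesis unfolding K0_def using B by (subst (asm) ennreal_le_iff) auto
  qed
  have d: "\<bar>(\<integral>z. T z \<partial>?O) - m\<bar> \<le> K0"
  proof -
    have "(\<integral>z. T z - m \<partial>?O) = (\<integral>z. T z \<partial>?O) - m"
      using intT by (subst Bochner_Integration.integral_diff) (auto simp: P.prob_space)
    moreover have "\<bar>\<integral>z. T z - m \<partial>?O\<bar> \<le> (\<integral>y. \<bar>T y - m\<bar> \<partial>?O)"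
      by (rule integral_abs_bound)
    ultimately show ?thesis using c by simp
  qed
  have "(\<integral>\<^sup>+ y. ennreal \<bar>T y - (\<integral>z. T z \<partial>?O)\<bar> \<partial>?O)
      \<le> (\<integral>\<^sup>+ y. ennreal \<bar>T y - m\<bar> + ennreal K0 \<partial>?O)"
  proof (rule nn_integral_mono)
    fix y
    have "\<bar>T y - (\<integral>z. T z \<partial>?O)\<bar> \<le> \<bar>T y - m\<bar> + K0" using d by linarith
    then show "ennreal \<bar>T y - (\<integral>z. T z \<partial>?O)\<bar> \<le> ennreal \<bar>T y - m\<bar> + ennreal K0"
    proof -
      have k: "0 \<le> K0" using d by linarith
      have "ennreal \<bar>T y - (\<integral>z. T z \<partial>?O)\<bar> \<le> ennreal (\<bar>T y - m\<bar> + K0)"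
        by (rule ennreal_leI) fact
      also have "\<dots> = ennreal \<bar>T y - m\<bar> + ennreal K0" using k by (intro ennreal_plus) auto
      finally show ?thesis .
    qed
  qed
  also have "\<dots> = (\<integral>\<^sup>+ y. ennreal \<bar>T y - m\<bar> \<partial>?O) + ennreal K0"
    by (subst nn_integral_add) (auto simp: P.emeasure_space_1)
  also have "\<dots> \<le> ennreal K0 + ennreal K0" using a by (intro add_right_mono)
  also have "\<dots> = ennreal (2 * K0)" unfolding K0_def using B by (subst ennreal_plus[symmetric]) auto
  finally show ?thesis unfolding K0_def .
qed



lemma PiM_component_nn:
  fixes M :: "nat \<Rightarrow> 'a measure"
  assumes prob: "\<And>i. prob_space (M i)" and I: "finite I" "i \<in> I"
    and g: "g \<in> borel_measurable (M i)"
  shows "(\<integral>\<^sup>+ x. g (x i) \<partial>PiM I M) = (\<integral>\<^sup>+ y. g y \<partial>M i)"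
proof -
  interpret product_prob_space M I
    using prob by (simp add: product_prob_space_def product_prob_space_axioms_def
        product_sigma_finite_def prob_space_imp_sigma_finite)
  have D: "distr (PiM I M) (PiM {i} M) (\<lambda>x. restrict x {i}) = PiM {i} M"
    using I by (intro distr_PiM_restrict_finite) auto
  have m: "(\<lambda>x. restrict x {i}) \<in> measurable (PiM I M) (PiM {i} M)"
    using I by (intro measurable_restrict_subset) auto
  have gm: "(\<lambda>z. g (z i)) \<in> borel_measurable (PiM {i} M)"
    using measurable_component_singleton[of i "{i}" M] g by (rule measurable_compose) simp
  have "(\<integral>\<^sup>+ x. g (x i) \<partial>PiM I M) = (\<integral>\<^sup>+ x. g (restrict x {i} i) \<partial>PiM I M)" by simp
  also have "\<dots> = (\<integral>\<^sup>+ z. g (z i) \<partial>distr (PiM I M) (PiM {i} M) (\<lambda>x. restrict x {i}))"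
  proof -
    have gm': "(\<lambda>z. g (z i)) \<in> borel_measurable (distr (PiM I M) (PiM {i} M) (\<lambda>x. restrict x {i}))"
      unfolding D by (rule gm)
    show ?thesis by (rule nn_integral_distr[OF m gm', symmetric])
  qed
  also have "\<dots> = (\<integral>\<^sup>+ z. g (z i) \<partial>PiM {i} M)" by (simp only: D)
  also have "\<dots> = (\<integral>\<^sup>+ y. g y \<partial>M i)" by (rule product_nn_integral_singleton[OF g])
  finally show ?thesis .
qed

lemma prod_markov:
  fixes M :: "nat \<Rightarrow> real measure" and f :: "nat \<Rightarrow> real \<Rightarrow> real"
  assumes prob: "\<And>i. prob_space (M i)" and sM: "\<And>i. sets (M i) = sets borel"
    and fm: "\<And>i. f i \<in> borel_measurable borel" and fn: "\<And>i y. 0 \<le> f i y"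
    and bnd: "\<And>i. i < n \<Longrightarrow> (\<integral>\<^sup>+ y. ennreal (f i y) \<partial>M i) \<le> ennreal K"
    and K: "0 \<le> K" and R: "0 < R"
  shows "\<exists>E \<in> sets (PiM {..<n} M). measure (PiM {..<n} M) E \<ge> 1 - real n * K / R \<and>
           (\<forall>y\<in>E. (\<Sum>i<n. f i (y i)) \<le> R)"
proof -
  let ?P = "PiM {..<n} M"
  interpret P: prob_space ?P by (rule prob_space_PiM) (rule prob)
  have fmi: "f i \<in> borel_measurable (M i)" for i using fm[of i] measurable_cong_sets[OF sM refl[of "sets borel"]] by metis
  have Sm: "(\<lambda>y. \<Sum>i<n. f i (y i)) \<in> borel_measurable ?P"
  proof (rule borel_measurable_sum)
    fix i assume "i \<in> {..<n}"
    then have c: "(\<lambda>x. x i) \<in> ?P \<rightarrow>\<^sub>M M i" by simp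
    show "(\<lambda>y. f i (y i)) \<in> borel_measurable ?P" using c fmi[of i] by (rule measurable_compose)
  qed
  define E where "E = {y \<in> space ?P. (\<Sum>i<n. f i (y i)) \<le> R}"
  have E: "E \<in> sets ?P" unfolding E_def using Sm by measurable
  have C: "space ?P - E \<subseteq> {y \<in> space ?P. 1 \<le> ennreal (1 / R) * ennreal (\<Sum>i<n. f i (y i))}"
  proof
    fix y assume y: "y \<in> space ?P - E"
    then have "R < (\<Sum>i<n. f i (y i))" unfolding E_def by auto
    then have "1 \<le> 1 / R * (\<Sum>i<n. f i (y i))" using R by (simp add: field_simps)
    then have "ennreal 1 \<le> ennreal (1 / R * (\<Sum>i<n. f i (y i)))" by (rule ennreal_leI)
    then show "y \<in> {y \<in> space ?P. 1 \<le> ennreal (1 / R) * ennreal (\<Sum>i<n. f i (y i))}"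
      using y R by (simp add: ennreal_mult[symmetric] sum_nonneg fn del: ennreal_1)
  qed
  have "emeasure ?P (space ?P - E) \<le> emeasure ?P {y \<in> space ?P. 1 \<le> ennreal (1 / R) * ennreal (\<Sum>i<n. f i (y i))}"
    using C by (intro emeasure_mono) (use Sm in measurable)
  also have "\<dots> \<le> ennreal (1 / R) * (\<integral>\<^sup>+ y. ennreal (\<Sum>i<n. f i (y i)) * indicator (space ?P) y \<partial>?P)"
    using nn_integral_Markov_inequality[of "\<lambda>y. ennreal (\<Sum>i<n. f i (y i))" "space ?P" ?P "ennreal (1/R)"]
    using Sm by simp
  also have "(\<integral>\<^sup>+ y. ennreal (\<Sum>i<n. f i (y i)) * indicator (space ?P) y \<partial>?P) = (\<integral>\<^sup>+ y. (\<Sum>i<n. ennreal (f i (y i))) \<partial>?P)"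
    by (intro nn_integral_cong) (simp add: fn)
  also have "\<dots> = (\<Sum>i<n. (\<integral>\<^sup>+ y. ennreal (f i (y i)) \<partial>?P))"
  proof (rule nn_integral_sum)
    fix i assume "i \<in> {..<n}"
    then show "(\<lambda>y. ennreal (f i (y i))) \<in> borel_measurable ?P"
    proof -
      have "(\<lambda>y. f i (y i)) \<in> borel_measurable ?P"
      proof -
        have c: "(\<lambda>x. x i) \<in> ?P \<rightarrow>\<^sub>M M i" using \<open>i \<in> {..<n}\<close> by simp
        show ?thesis using c fmi[of i] by (rule measurable_compose)
      qed
      then show ?thesis by measurable
    qed
  qed
  also have "\<dots> = (\<Sum>i<n. (\<integral>\<^sup>+ y. ennreal (f i y) \<partial>M i))"
    by (intro sum.cong refl PiM_component_nn[OF prob]) (use fmi in auto)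
  also have "\<dots> \<le> (\<Sum>i<n. ennreal K)" by (intro sum_mono bnd) auto
  also have "\<dots> = ennreal (real n * K)" using K by (simp add: ennreal_of_nat_eq_real_of_nat ennreal_mult)
  finally have "emeasure ?P (space ?P - E) \<le> ennreal (1 / R) * ennreal (real n * K)" by (simp add: mult_left_mono)
  then have "emeasure ?P (space ?P - E) \<le> ennreal (real n * K / R)"
    using R K by (simp add: ennreal_mult[symmetric])
  then have "P.prob (space ?P - E) \<le> real n * K / R"
    using R K by (simp add: P.emeasure_eq_measure ennreal_le_iff)
  then have "P.prob E \<ge> 1 - real n * K / R" using P.prob_compl[OF E] by simp
  moreover have "\<forall>y\<in>E. (\<Sum>i<n. f i (y i)) \<le> R" unfolding E_def by auto
  ultimately show ?thesis using E by blast
qed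



lemma laplace_interval:
  assumes lam: "0 < lam" and r: "0 < r"
  shows "ennreal (lam * r * exp (- lam * (\<bar>c\<bar> + r)))
         \<le> emeasure (density lborel (\<lambda>x. ennreal (laplace_density lam x))) {c - r..c + r}"
proof -
  have m: "(\<lambda>x. ennreal (laplace_density lam x)) \<in> borel_measurable lborel"
    unfolding laplace_density_def by measurable
  have "emeasure (density lborel (\<lambda>x. ennreal (laplace_density lam x))) {c - r..c + r}
      = (\<integral>\<^sup>+ x. ennreal (laplace_density lam x) * indicator {c - r..c + r} x \<partial>lborel)"
    using m by (rule emeasure_density) simp
  also have "\<dots> \<ge> (\<integral>\<^sup>+ x. ennreal (lam / 2 * exp (- lam * (\<bar>c\<bar> + r))) * indicator {c - r..c + r} x \<partial>lborel)"
  proof (rule nn_integral_mono)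
    fix x
    show "ennreal (lam / 2 * exp (- lam * (\<bar>c\<bar> + r))) * indicator {c - r..c + r} x
          \<le> ennreal (laplace_density lam x) * indicator {c - r..c + r} x"
    proof (cases "x \<in> {c - r..c + r}")
      case True
      then have "\<bar>x\<bar> \<le> \<bar>c\<bar> + r" by auto
      then have "- lam * (\<bar>c\<bar> + r) \<le> - lam * \<bar>x\<bar>" using lam by simp
      then have "lam / 2 * exp (- lam * (\<bar>c\<bar> + r)) \<le> lam / 2 * exp (- lam * \<bar>x\<bar>)"
        using lam by (intro mult_left_mono) auto
      then show ?thesis using True by (simp add: laplace_density_def ennreal_leI)
    qed simp
  qed
  also have "(\<integral>\<^sup>+ x. ennreal (lam / 2 * exp (- lam * (\<bar>c\<bar> + r))) * indicator {c - r..c + r} x \<partial>lborel)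
      = ennreal (lam / 2 * exp (- lam * (\<bar>c\<bar> + r))) * ennreal (2 * r)"
    using r by (simp add: nn_integral_cmult_indicator)
  also have "\<dots> = ennreal (lam * r * exp (- lam * (\<bar>c\<bar> + r)))"
    using lam r by (simp add: ennreal_mult[symmetric])
  finally show ?thesis .
qed

lemma sf_coord: "sigma_finite_measure (coord_prior lam S j)"
proof (cases "j \<in> S")
  case True
  have m: "(\<lambda>x. ennreal (laplace_density lam x)) \<in> borel_measurable lborel"
    unfolding laplace_density_def by measurable
  show ?thesis using True unfolding coord_prior_def
    by (simp add: sigma_finite_measure.sigma_finite_iff_density_finite[OF sigma_finite_lborel m])
next
  case False then show ?thesis unfolding coord_prior_def
    by (simp add: prob_space_return prob_space_imp_sigma_finite)
qed

lemma prior_lower: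
  fixes g :: "(nat \<Rightarrow> real) \<Rightarrow> ennreal" and bs :: "nat \<Rightarrow> real"
  assumes S: "S \<subseteq> {..<d}" and lam: "0 < lam" and r: "0 < r" and k: "0 \<le> \<kappa>"
    and hB: "\<And>\<beta>. \<beta> \<in> PiE {..<d} (\<lambda>j. if j \<in> S then {bs j - r..bs j + r} else {0}) \<Longrightarrow> ennreal \<kappa> \<le> g \<beta>"
  shows "ennreal (model_weight d a S * \<kappa> * (\<Prod>j\<in>S. lam * r * exp (- lam * (\<bar>bs j\<bar> + r))))
         \<le> prior_integral d a lam g"
proof -
  let ?B = "PiE {..<d} (\<lambda>j. if j \<in> S then {bs j - r..bs j + r} else {0})"
  let ?P = "PiM {..<d} (coord_prior lam S)"
  interpret product_sigma_finite "coord_prior lam S"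
    by (simp add: product_sigma_finite_def sf_coord)
  have mw: "0 \<le> model_weight d a S"
    unfolding model_weight_def C_norm_def by (auto intro!: sum_nonneg mult_nonneg_nonneg divide_nonneg_nonneg)
  have sets: "(if j \<in> S then {bs j - r..bs j + r} else {0}) \<in> sets (coord_prior lam S j)" for j
    unfolding coord_prior_def by auto
  have "emeasure ?P ?B = (\<Prod>j<d. emeasure (coord_prior lam S j) (if j \<in> S then {bs j - r..bs j + r} else {0}))"
    by (rule emeasure_PiM) (auto simp: sets)
  also have "\<dots> = (\<Prod>j\<in>S. emeasure (coord_prior lam S j) {bs j - r..bs j + r})"
  proof -
    have "(\<Prod>j<d. emeasure (coord_prior lam S j) (if j \<in> S then {bs j - r..bs j + r} else {0}))
        = (\<Prod>j\<in>S. emeasure (coord_prior lam S j) (if j \<in> S then {bs j - r..bs j + r} else {0}))"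
      using S by (intro prod.mono_neutral_right) (auto simp: coord_prior_def)
    then show ?thesis by simp
  qed
  also have "\<dots> \<ge> (\<Prod>j\<in>S. ennreal (lam * r * exp (- lam * (\<bar>bs j\<bar> + r))))"
  proof (rule prod_mono_ennreal)
    fix j assume "j \<in> S"
    then show "ennreal (lam * r * exp (- lam * (\<bar>bs j\<bar> + r))) \<le> emeasure (coord_prior lam S j) {bs j - r..bs j + r}"
      using laplace_interval[OF lam r, of "bs j"] unfolding coord_prior_def by simp
  qed
  finally have EB: "(\<Prod>j\<in>S. ennreal (lam * r * exp (- lam * (\<bar>bs j\<bar> + r)))) \<le> emeasure ?P ?B" .
  have Bs: "?B \<in> sets ?P" by (rule sets_PiM_I_finite) (auto simp: sets)
  have "(\<integral>\<^sup>+ \<beta>. g \<beta> \<partial>?P) \<ge> (\<integral>\<^sup>+ \<beta>. ennreal \<kappa> * indicator ?B \<beta> \<partial>?P)"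
    by (intro nn_integral_mono) (auto simp: hB split: split_indicator)
  also have "(\<integral>\<^sup>+ \<beta>. ennreal \<kappa> * indicator ?B \<beta> \<partial>?P) = ennreal \<kappa> * emeasure ?P ?B"
    using Bs by (rule nn_integral_cmult_indicator)
  finally have I: "ennreal \<kappa> * (\<Prod>j\<in>S. ennreal (lam * r * exp (- lam * (\<bar>bs j\<bar> + r)))) \<le> (\<integral>\<^sup>+ \<beta>. g \<beta> \<partial>?P)"
    using EB by (meson mult_left_mono order_trans zero_le)
  have "ennreal (model_weight d a S * \<kappa> * (\<Prod>j\<in>S. lam * r * exp (- lam * (\<bar>bs j\<bar> + r))))
      = ennreal (model_weight d a S) * (ennreal \<kappa> * (\<Prod>j\<in>S. ennreal (lam * r * exp (- lam * (\<bar>bs j\<bar> + r)))))"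
    using mw k lam r by (simp add: ennreal_mult[symmetric] prod_nonneg prod_ennreal mult.assoc)
  also have "\<dots> \<le> ennreal (model_weight d a S) * (\<integral>\<^sup>+ \<beta>. g \<beta> \<partial>?P)"
    using I by (rule mult_left_mono) simp
  also have "\<dots> \<le> prior_integral d a lam g"
    unfolding prior_integral_def
    using S by (intro member_le_sum[where f = "\<lambda>S. ennreal (model_weight d a S) * (\<integral>\<^sup>+ \<beta>. g \<beta> \<partial>PiM {..<d} (coord_prior lam S))"]) auto
  finally show ?thesis .
qed



lemma prod_split:
  fixes bs :: "nat \<Rightarrow> real"
  assumes "finite S"
  shows "(\<Prod>j\<in>S. lam * r * exp (- lam * (\<bar>bs j\<bar> + r)))
       = (lam * r) ^ card S * exp (- (lam * r * real (card S))) * exp (- lam * (\<Sum>j\<in>S. \<bar>bs j\<bar>))"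
proof -
  have "(\<Prod>j\<in>S. lam * r * exp (- lam * (\<bar>bs j\<bar> + r)))
      = (\<Prod>j\<in>S. (lam * r * exp (- (lam * r))) * exp (- lam * \<bar>bs j\<bar>))"
    by (intro prod.cong refl) (simp add: algebra_simps exp_add[symmetric])
  also have "\<dots> = (lam * r * exp (- (lam * r))) ^ card S * (\<Prod>j\<in>S. exp (- lam * \<bar>bs j\<bar>))"
    by (simp add: prod.distrib)
  also have "(\<Prod>j\<in>S. exp (- lam * \<bar>bs j\<bar>)) = exp (\<Sum>j\<in>S. - lam * \<bar>bs j\<bar>)"
    using assms by (simp add: exp_sum)
  also have "(\<Sum>j\<in>S. - lam * \<bar>bs j\<bar>) = - lam * (\<Sum>j\<in>S. \<bar>bs j\<bar>)"
    by (simp add: sum_distrib_left)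
  also have "(lam * r * exp (- (lam * r))) ^ card S = (lam * r) ^ card S * exp (- (lam * r * real (card S)))"
    by (simp add: power_mult_distrib exp_of_nat_mult[symmetric] mult.commute)
  finally show ?thesis .
qed

lemma final_arith:
  fixes C lam r dd a bn P N :: real and s :: nat
  assumes C: "0 \<le> C" and dd: "1 \<le> dd" and lam: "0 < lam" and r: "0 < r"
    and bn: "0 < bn" "bn \<le> dd ^ s"
    and lr: "dd powr (-5) \<le> lam * r" and lrs: "lam * r * real s \<le> 1"
    and P: "P = (lam * r) ^ s * exp (- (lam * r * real s)) * exp (- lam * N)"
  shows "exp (-3) * C * dd powr (- (a + 6) * real s) * exp (- lam * N)
         \<le> (C / bn * dd powr (- a * real s)) * exp (-2) * P"
proof -
  have d0: "0 < dd" using dd by simp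
  have b1: "dd powr (- real s) \<le> 1 / bn"
  proof -
    have "dd powr (- real s) = 1 / dd ^ s" using d0 by (simp add: powr_minus powr_realpow divide_inverse)
    also have "\<dots> \<le> 1 / bn" using bn by (intro divide_left_mono) auto
    finally show ?thesis .
  qed
  have b2: "(dd powr (-5)) ^ s \<le> (lam * r) ^ s" using lr by (intro power_mono) auto
  have b3: "exp (-1) \<le> exp (- (lam * r * real s))" using lrs by simp
  have eqp: "(dd powr (-5)) ^ s = dd powr (- 5 * real s)" using d0 by (simp add: powr_realpow[symmetric] powr_powr)
  have "exp (-3) * C * dd powr (- (a + 6) * real s) * exp (- lam * N)
      = C * dd powr (- real s) * dd powr (- a * real s) * exp (-2) * (dd powr (-5)) ^ s * exp (-1) * exp (- lam * N)"
  proof -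
    have "dd powr (- (a + 6) * real s) = dd powr (- real s) * dd powr (- a * real s) * dd powr (- 5 * real s)"
      by (simp add: powr_add[symmetric] algebra_simps)
    moreover have "exp (-3) = exp (-2) * exp (-1::real)" by (simp add: exp_add[symmetric])
    ultimately show ?thesis unfolding eqp by (simp add: algebra_simps)
  qed
  also have "\<dots> \<le> C * (1 / bn) * dd powr (- a * real s) * exp (-2) * (lam * r) ^ s * exp (- (lam * r * real s)) * exp (- lam * N)"
    using b1 b2 b3 C lam r bn
    by (intro mult_right_mono mult_left_mono mult_mono) (auto intro!: mult_nonneg_nonneg divide_nonneg_pos)
  also have "\<dots> = (C / bn * dd powr (- a * real s)) * exp (-2) * P" unfolding P by simp
  finally show ?thesis .
qed



lemma Ln_lower:
  fixes \<beta> \<beta>s :: "nat \<Rightarrow> real" and X :: "nat \<Rightarrow> nat \<Rightarrow> real" and d :: nat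
    and \<eta> :: "real \<Rightarrow> real" and \<mu> :: "real measure" and h T A :: "real \<Rightarrow> real"
  defines "e \<equiv> \<lambda>i. \<eta> (lin_pred X d \<beta> i)" and "es \<equiv> \<lambda>i. \<eta> (lin_pred X d \<beta>s i)"
  defines "ET \<equiv> \<lambda>i. integral\<^sup>L (obs_dist \<mu> h T A (es i)) T"
  assumes R: "(\<Sum>i<n. \<bar>T (y i) - ET i\<bar>) \<le> R"
    and del: "\<And>i. i < n \<Longrightarrow> \<bar>e i - es i\<bar> \<le> \<delta>"
    and Dt: "\<And>i. i < n \<Longrightarrow> A (e i) - A (es i) - (e i - es i) * A1 (es i) \<le> B * (e i - es i)\<^sup>2 / 2"
    and B: "0 \<le> B" and d0: "0 \<le> \<delta>" and dR: "\<delta> * R \<le> 1" and nB: "real n * B * \<delta>\<^sup>2 / 2 \<le> 1"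
  shows "-2 \<le> Ln \<mu> h T A A1 \<eta> X n d \<beta>s \<beta> y"
proof -
  have Z: "- 1 \<le> (\<Sum>i<n. (T (y i) - ET i) * (e i - es i))"
  proof -
    have "(\<Sum>i<n. (T (y i) - ET i) * (e i - es i)) \<ge> (\<Sum>i<n. - (\<bar>T (y i) - ET i\<bar> * \<delta>))"
    proof (rule sum_mono)
      fix i assume "i \<in> {..<n}"
      then have "\<bar>e i - es i\<bar> \<le> \<delta>" using del by auto
      then have "\<bar>(T (y i) - ET i) * (e i - es i)\<bar> \<le> \<bar>T (y i) - ET i\<bar> * \<delta>"
        by (simp add: abs_mult mult_left_mono)
      then show "- (\<bar>T (y i) - ET i\<bar> * \<delta>) \<le> (T (y i) - ET i) * (e i - es i)" by linarith
    qed
    moreover have "(\<Sum>i<n. - (\<bar>T (y i) - ET i\<bar> * \<delta>)) = - (\<delta> * (\<Sum>i<n. \<bar>T (y i) - ET i\<bar>))"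
      by (simp add: sum_negf sum_distrib_left mult.commute)
    moreover have "\<delta> * (\<Sum>i<n. \<bar>T (y i) - ET i\<bar>) \<le> \<delta> * R" using R d0 by (rule mult_left_mono)
    ultimately show ?thesis using dR by linarith
  qed
  have D: "(\<Sum>i<n. A (e i) - A (es i) - (e i - es i) * A1 (es i)) \<le> 1"
  proof -
    have "(\<Sum>i<n. A (e i) - A (es i) - (e i - es i) * A1 (es i)) \<le> (\<Sum>i<n. B * \<delta>\<^sup>2 / 2)"
    proof (rule sum_mono)
      fix i assume i: "i \<in> {..<n}"
      have "(e i - es i)\<^sup>2 = \<bar>e i - es i\<bar>\<^sup>2" by simp
      also have "\<dots> \<le> \<delta>\<^sup>2" using del[of i] i by (intro power_mono) auto
      finally have "B * (e i - es i)\<^sup>2 / 2 \<le> B * \<delta>\<^sup>2 / 2" using B by (intro divide_right_mono mult_left_mono) auto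
      then show "A (e i) - A (es i) - (e i - es i) * A1 (es i) \<le> B * \<delta>\<^sup>2 / 2" using Dt[of i] i by auto
    qed
    also have "\<dots> = real n * B * \<delta>\<^sup>2 / 2" by simp
    finally show ?thesis using nB by linarith
  qed
  show ?thesis unfolding Ln_def Let_def using Z D
    unfolding e_def es_def ET_def by linarith
qed


lemma M1_ge1: "0 < M0 \<Longrightarrow> 1 \<le> M1 M0"
  unfolding M1_def by (intro one_le_inverse) auto

lemma Xnorm_facts:
  assumes "0 < n" "0 < d"
  shows "\<And>i j. i < n \<Longrightarrow> j < d \<Longrightarrow> \<bar>X i j\<bar> \<le> Xnorm X n d" "0 \<le> Xnorm X n d"
proof -
  have eq: "{\<bar>X i j\<bar> | i j. i < n \<and> j < d} = (\<lambda>(i, j). \<bar>X i j\<bar>) ` ({..<n} \<times> {..<d})" by auto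
  have fin: "finite {\<bar>X i j\<bar> | i j. i < n \<and> j < d}" unfolding eq by simp
  show "\<And>i j. i < n \<Longrightarrow> j < d \<Longrightarrow> \<bar>X i j\<bar> \<le> Xnorm X n d"
    unfolding Xnorm_def using fin by (intro Max_ge) auto
  have "\<bar>X 0 0\<bar> \<le> Xnorm X n d" unfolding Xnorm_def using fin assms by (intro Max_ge) auto
  then show "0 \<le> Xnorm X n d" by linarith
qed

lemma main_lemma:
  fixes \<mu> :: "real measure" and h T A A1 A2 :: "real \<Rightarrow> real" and M0 :: real and \<eta> :: "real \<Rightarrow> real"
    and X :: "nat \<Rightarrow> nat \<Rightarrow> nat \<Rightarrow> real" and d :: "nat \<Rightarrow> nat" and a lam b :: "nat \<Rightarrow> real"
    and \<beta>s :: "nat \<Rightarrow> nat \<Rightarrow> real"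
  assumes ok: "expfam_ok \<mu> h T A A1 A2" and cl: "clip_ok \<mu> h T A2 M0 \<eta>"
    and dn: "\<forall>n. n < d n"
    and lamH: "\<forall>n. 0 < lam n \<and> M_AX M0 (X n) n (d n) / real (d n) \<le> lam n \<and>
          lam n \<le> M_AX M0 (X n) n (d n) * sqrt (ln (real (d n)))"
    and bo: "b \<in> o(\<lambda>n. real n / ln (real (d n)))"
    and bz: "\<forall>n. \<forall>j\<ge>d n. \<beta>s n j = 0"
    and cardH: "\<forall>n. 0 < card {j. \<beta>s n j \<noteq> 0} \<and> real (card {j. \<beta>s n j \<noteq> 0}) \<le> b n"
  shows "\<forall>\<^sub>F n in sequentially.
        \<exists>E \<in> sets (data_dist \<mu> h T A \<eta> (X n) n (d n) (\<beta>s n)).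
          measure (data_dist \<mu> h T A \<eta> (X n) n (d n) (\<beta>s n)) E
            \<ge> 1 - 1 / (real (card {j. \<beta>s n j \<noteq> 0}) * ln (real (d n))) \<and>
          (\<forall>y\<in>E.
             prior_integral (d n) (a n) (lam n)
               (\<lambda>\<beta>. ennreal (exp (Ln \<mu> h T A A1 \<eta> (X n) n (d n) (\<beta>s n) \<beta> y)))
             \<ge> ennreal (exp (-3) * C_norm (d n) (a n)
                   * real (d n) powr (- (a n + 6) * real (card {j. \<beta>s n j \<noteq> 0}))
                   * exp (- lam n * (\<Sum>j<d n. \<bar>\<beta>s n j\<bar>))))"
proof -
  define B where "B = M0\<^sup>2 / 2"
  have M0: "0 < M0" and inI: "\<And>x. \<eta> x \<in> I_A \<mu> h T A2 (M0\<^sup>2 / 2)"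
    and lip: "\<exists>L. lipschitz_on L UNIV \<eta>" and inj: "inj \<eta>"
    using cl unfolding clip_ok_def by blast+
  have B0: "0 < B" unfolding B_def using M0 by simp
  obtain L0 where L0: "lipschitz_on L0 UNIV \<eta>" using lip by blast
  define U where "U = range \<eta>"
  have Uo: "open U" "is_interval U" unfolding U_def using range_open_interval[OF L0 inj] by auto
  have UN: "U \<subseteq> nat_param \<mu> h T" and bd: "\<And>t. t \<in> U \<Longrightarrow> A2 t \<le> B"
    using inI unfolding U_def I_A_def B_def by auto
  have Uint: "U \<subseteq> interior (nat_param \<mu> h T)" by (rule interior_maximal[OF UN Uo(1)])
  have d1: "\<And>t. t \<in> U \<Longrightarrow> (A has_real_derivative A1 t) (at t)"
  proof -
    fix t assume t: "t \<in> U"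
    then have "(A has_real_derivative A1 t) (at t within nat_param \<mu> h T)"
      using expfam_okD(6)[OF ok] UN by auto
    moreover have "at t within nat_param \<mu> h T = at t" using Uint t by (intro at_within_interior) blast
    ultimately show "(A has_real_derivative A1 t) (at t)" by simp
  qed
  have d2: "\<And>t. t \<in> U \<Longrightarrow> (A1 has_real_derivative A2 t) (at t)"
  proof -
    fix t assume t: "t \<in> U"
    then have "(A1 has_real_derivative A2 t) (at t within nat_param \<mu> h T)"
      using expfam_okD(7)[OF ok] UN by auto
    moreover have "at t within nat_param \<mu> h T = at t" using Uint t by (intro at_within_interior) blast
    ultimately show "(A1 has_real_derivative A2 t) (at t)" by simp
  qed
  have M1: "1 \<le> M1 M0" by (rule M1_ge1[OF M0])
  define L where "L = max 1 (max L0 (M1 M0))"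
  have L1: "1 \<le> L" "M1 M0 \<le> L" unfolding L_def by auto
  have lipL: "\<bar>\<eta> u - \<eta> v\<bar> \<le> L * \<bar>u - v\<bar>" for u v
  proof -
    have "\<bar>\<eta> u - \<eta> v\<bar> \<le> L0 * \<bar>u - v\<bar>" using lipschitz_onD[OF L0, of u v] by (simp add: dist_real_def)
    also have "\<dots> \<le> L * \<bar>u - v\<bar>" unfolding L_def by (intro mult_right_mono) auto
    finally show ?thesis .
  qed
  define K where "K = 2 * (1 + 2 * exp 1 * B)"
  define K1 where "K1 = K + B + 1"
  have K0: "0 < K" unfolding K_def using B0 by (simp add: add_pos_nonneg)
  have K1: "1 \<le> K1" "K \<le> K1" "B \<le> K1" unfolding K1_def using B0 K0 by auto
  have mom: "\<And>\<theta>. \<theta> \<in> U \<Longrightarrow> (\<integral>\<^sup>+ y. ennreal \<bar>T y - (\<integral>z. T z \<partial>obs_dist \<mu> h T A \<theta>)\<bar> \<partial>obs_dist \<mu> h T A \<theta>) \<le> ennreal K"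
    unfolding K_def by (rule abs_moment[OF ok Uo UN d1 d2 bd B0])
  have probO: "\<And>\<theta>. prob_space (obs_dist \<mu> h T A (\<eta> \<theta>))" using prob_obs[OF ok] UN unfolding U_def by auto
  have Tb: "T \<in> borel_measurable borel"
    using expfam_okD(3)[OF ok] measurable_cong_sets[OF expfam_okD(1)[OF ok] refl[of "sets borel"]] by metis
  have ev1: "\<forall>\<^sub>F n in sequentially. norm (b n) \<le> 1 * norm (real n / ln (real (d n)))"
    using landau_o.smallD[OF bo, of 1] by simp
  have ev2: "\<forall>\<^sub>F n in sequentially. 3 \<le> n" by (rule eventually_ge_at_top)
  have ev3: "\<forall>\<^sub>F n in sequentially. L * K1 \<le> real n"
  proof -
    have "\<forall>\<^sub>F n in sequentially. nat \<lceil>L * K1\<rceil> \<le> n" by (rule eventually_ge_at_top)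
    then show ?thesis
    proof eventually_elim
      case (elim n)
      then have "real (nat \<lceil>L * K1\<rceil>) \<le> real n" by simp
      moreover have "L * K1 \<le> real (nat \<lceil>L * K1\<rceil>)" by (rule real_nat_ceiling_ge)
      ultimately show ?case by linarith
    qed
  qed
  show ?thesis using ev1 ev2 ev3
  proof eventually_elim
    case (elim n)
    define dd where "dd = d n"
    define S where "S = {j. \<beta>s n j \<noteq> 0}"
    define s where "s = card S"
    define m where "m = Xnorm (X n) n dd"
    define lm where "lm = lam n"
    have n3: "3 \<le> n" and nLK: "L * K1 \<le> real n" using elim by auto
    have ndd: "n < dd" using dn unfolding dd_def by auto
    have n0: "0 < n" using n3 by simp
    have dd0: "0 < dd" using ndd by simp
    have ddr: "real n < real dd" using ndd by simp
    have lnd: "1 \<le> ln (real dd)"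
    proof -
      have "exp 1 \<le> real dd" using exp_le n3 ndd by linarith
      then have "ln (exp 1) \<le> ln (real dd)" using dd0 by (subst ln_le_cancel_iff) auto
      then show ?thesis by simp
    qed
    have S_sub: "S \<subseteq> {..<dd}"
    proof
      fix j assume "j \<in> S"
      then have "\<beta>s n j \<noteq> 0" unfolding S_def by simp
      show "j \<in> {..<dd}"
      proof (rule ccontr)
        assume "j \<notin> {..<dd}"
        then have "d n \<le> j" unfolding dd_def by simp
        then have "\<beta>s n j = 0" using bz by blast
        then show False using \<open>\<beta>s n j \<noteq> 0\<close> by simp
      qed
    qed
    have finS: "finite S" using S_sub finite_subset by blast
    have s1: "1 \<le> s" and sb: "real s \<le> b n" using cardH unfolding s_def S_def by (auto simp: Suc_le_eq)
    have sdd: "s \<le> dd" unfolding s_def using card_mono[OF _ S_sub] by simp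
    have bln: "b n * ln (real dd) \<le> real n"
    proof -
      have "b n \<le> \<bar>real n / ln (real dd)\<bar>" using elim(1) unfolding dd_def by simp
      also have "\<dots> = real n / ln (real dd)" using lnd by simp
      finally show ?thesis using lnd by (simp add: pos_le_divide_eq)
    qed
    have sln: "real s * ln (real dd) \<le> real n"
    proof -
      have "real s * ln (real dd) \<le> b n * ln (real dd)" using sb lnd by (intro mult_right_mono) auto
      then show ?thesis using bln by linarith
    qed
    have sn: "real s \<le> real n"
    proof -
      have "real s * 1 \<le> real s * ln (real dd)" using lnd by (intro mult_left_mono) auto
      then show ?thesis using sln by linarith
    qed
    have lnn: "ln (real dd) \<le> real n"
    proof -
      have "1 * ln (real dd) \<le> real s * ln (real dd)" using lnd s1 by (intro mult_right_mono) auto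
      then show ?thesis using sln by linarith
    qed
    have sln0: "0 < real s * ln (real dd)" using s1 lnd by simp
    have Xb: "\<And>i j. i < n \<Longrightarrow> j < dd \<Longrightarrow> \<bar>X n i j\<bar> \<le> m" and m0: "0 \<le> m"
      unfolding m_def using Xnorm_facts[OF n0 dd0, where X = "X n"] by auto
    have lm0: "0 < lm" and lmlo: "m * M1 M0 / real dd \<le> lm" and lmhi: "lm \<le> m * M1 M0 * sqrt (ln (real dd))"
      using lamH unfolding lm_def m_def dd_def M_AX_def by auto
    have mpos: "0 < m"
    proof (rule ccontr)
      assume "\<not> 0 < m"
      then have "m = 0" using m0 by simp
      then show False using lmhi lm0 by simp
    qed
    define \<delta> where "\<delta> = 1 / (K1 * (real n)\<^sup>2)"
    define r where "r = \<delta> / (L * m * real s)"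
    define R where "R = K * (real n)\<^sup>2"
    have \<delta>0: "0 < \<delta>" unfolding \<delta>_def using K1 n0 by simp
    have r0: "0 < r" unfolding r_def using \<delta>0 L1 mpos s1 by simp
    have R0: "0 < R" unfolding R_def using K0 n0 by simp
    have n21: "1 \<le> (real n)\<^sup>2" using n0 by (simp add: one_le_power)
    have K1n: "1 \<le> K1 * (real n)\<^sup>2" using mult_mono[OF K1(1) n21] K1(1) by simp
    have \<delta>1: "\<delta> \<le> 1" unfolding \<delta>_def using K1n by simp
    define th where "th = (\<lambda>i. \<eta> (lin_pred (X n) dd (\<beta>s n) i))"
    define ET where "ET = (\<lambda>i. \<integral>z. T z \<partial>obs_dist \<mu> h T A (th i))"
    have thU: "\<And>i. th i \<in> U" unfolding th_def U_def by simp
    have DD: "data_dist \<mu> h T A \<eta> (X n) n dd (\<beta>s n) = PiM {..<n} (\<lambda>i. obs_dist \<mu> h T A (th i))"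
      unfolding data_dist_def th_def by simp
    have "\<exists>E \<in> sets (PiM {..<n} (\<lambda>i. obs_dist \<mu> h T A (th i))).
            measure (PiM {..<n} (\<lambda>i. obs_dist \<mu> h T A (th i))) E \<ge> 1 - real n * K / R \<and>
           (\<forall>y\<in>E. (\<Sum>i<n. \<bar>T (y i) - ET i\<bar>) \<le> R)"
    proof (rule prod_markov[where f = "\<lambda>i y. \<bar>T y - ET i\<bar>"])
      show "\<And>i. prob_space (obs_dist \<mu> h T A (th i))" unfolding th_def by (rule probO)
      show "\<And>i. sets (obs_dist \<mu> h T A (th i)) = sets borel" by (rule obs_meas(2)[OF ok])
      show "\<And>i. (\<lambda>y. \<bar>T y - ET i\<bar>) \<in> borel_measurable borel" using Tb by measurable
      show "\<And>i y. 0 \<le> \<bar>T y - ET i\<bar>" by simp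
      show "\<And>i. i < n \<Longrightarrow> (\<integral>\<^sup>+ y. ennreal \<bar>T y - ET i\<bar> \<partial>obs_dist \<mu> h T A (th i)) \<le> ennreal K"
        unfolding ET_def using mom thU by blast
      show "0 \<le> K" using K0 by simp
      show "0 < R" by (rule R0)
    qed
    then obtain E where E: "E \<in> sets (PiM {..<n} (\<lambda>i. obs_dist \<mu> h T A (th i)))"
      "measure (PiM {..<n} (\<lambda>i. obs_dist \<mu> h T A (th i))) E \<ge> 1 - real n * K / R"
      "\<And>y. y \<in> E \<Longrightarrow> (\<Sum>i<n. \<bar>T (y i) - ET i\<bar>) \<le> R" by blast
    have meas: "measure (PiM {..<n} (\<lambda>i. obs_dist \<mu> h T A (th i))) E \<ge> 1 - 1 / (real s * ln (real dd))"
    proof -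
      have "real n * K / R = 1 / real n" unfolding R_def using K0 n0 by (simp add: power2_eq_square)
      also have "\<dots> \<le> 1 / (real s * ln (real dd))" using sln sln0 by (intro divide_left_mono) auto
      finally show ?thesis using E(2) by linarith
    qed
    have main: "ennreal (exp (-3) * C_norm dd (a n) * real dd powr (- (a n + 6) * real s)
                   * exp (- lm * (\<Sum>j<dd. \<bar>\<beta>s n j\<bar>)))
            \<le> prior_integral dd (a n) lm (\<lambda>\<beta>. ennreal (exp (Ln \<mu> h T A A1 \<eta> (X n) n dd (\<beta>s n) \<beta> y)))"
      if y: "y \<in> E" for y
    proof -
      have hB: "ennreal (exp (-2)) \<le> ennreal (exp (Ln \<mu> h T A A1 \<eta> (X n) n dd (\<beta>s n) \<beta> y))"
        if \<beta>: "\<beta> \<in> PiE {..<dd} (\<lambda>j. if j \<in> S then {\<beta>s n j - r..\<beta>s n j + r} else {0})" for \<beta>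
      proof -
        have lin: "\<bar>lin_pred (X n) dd \<beta> i - lin_pred (X n) dd (\<beta>s n) i\<bar> \<le> m * r * real s" if i: "i < n" for i
        proof -
          have "lin_pred (X n) dd \<beta> i - lin_pred (X n) dd (\<beta>s n) i = (\<Sum>j<dd. X n i j * (\<beta> j - \<beta>s n j))"
            unfolding lin_pred_def by (simp add: sum_subtractf algebra_simps)
          then have "\<bar>lin_pred (X n) dd \<beta> i - lin_pred (X n) dd (\<beta>s n) i\<bar> \<le> (\<Sum>j<dd. \<bar>X n i j * (\<beta> j - \<beta>s n j)\<bar>)"
            by (simp add: sum_abs)
          also have "\<dots> \<le> (\<Sum>j<dd. if j \<in> S then m * r else 0)"
          proof (rule sum_mono)
            fix j assume j: "j \<in> {..<dd}"
            have bj: "\<beta> j \<in> (if j \<in> S then {\<beta>s n j - r..\<beta>s n j + r} else {0})"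
              using PiE_mem[OF \<beta> j] .
            show "\<bar>X n i j * (\<beta> j - \<beta>s n j)\<bar> \<le> (if j \<in> S then m * r else 0)"
            proof (cases "j \<in> S")
              case True
              then have "\<bar>\<beta> j - \<beta>s n j\<bar> \<le> r" using bj by auto
              moreover have "\<bar>X n i j\<bar> \<le> m" using Xb[OF i] j by simp
              ultimately have "\<bar>X n i j\<bar> * \<bar>\<beta> j - \<beta>s n j\<bar> \<le> m * r"
                using m0 by (intro mult_mono) auto
              then show ?thesis using True by (simp add: abs_mult)
            next
              case False
              then have "\<beta> j = 0" "\<beta>s n j = 0" using bj unfolding S_def by auto
              then show ?thesis using False by simp
            qed
          qed
          also have "\<dots> = (\<Sum>j\<in>{..<dd} \<inter> S. m * r)" using sum.inter_restrict[of "{..<dd}" "\<lambda>_. m * r" S] by simp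
          also have "{..<dd} \<inter> S = S" using S_sub by blast
          also have "(\<Sum>j\<in>S. m * r) = m * r * real s" unfolding s_def by simp
          finally show ?thesis .
        qed
        have del: "\<bar>\<eta> (lin_pred (X n) dd \<beta> i) - th i\<bar> \<le> \<delta>" if i: "i < n" for i
        proof -
          have "\<bar>\<eta> (lin_pred (X n) dd \<beta> i) - th i\<bar> \<le> L * \<bar>lin_pred (X n) dd \<beta> i - lin_pred (X n) dd (\<beta>s n) i\<bar>"
            unfolding th_def by (rule lipL)
          also have "\<dots> \<le> L * (m * r * real s)" using lin[OF i] L1 by (intro mult_left_mono) auto
          finally have "\<bar>\<eta> (lin_pred (X n) dd \<beta> i) - th i\<bar> \<le> L * (m * r * real s)" .
          also have "L * (m * r * real s) = \<delta>" unfolding r_def using L1 mpos s1 by (simp add: field_simps)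
          finally show ?thesis .
        qed
        have Dt: "A (\<eta> (lin_pred (X n) dd \<beta> i)) - A (th i) - (\<eta> (lin_pred (X n) dd \<beta> i) - th i) * A1 (th i)
                  \<le> B * (\<eta> (lin_pred (X n) dd \<beta> i) - th i)\<^sup>2 / 2" for i
          by (rule taylor_bound[OF Uo(2) d1 d2 bd thU]) (auto simp: U_def intro: rangeI)
        have dR: "\<delta> * R \<le> 1" unfolding \<delta>_def R_def using K1 n0 by simp
        have nB: "real n * B * \<delta>\<^sup>2 / 2 \<le> 1"
        proof -
          have "\<delta>\<^sup>2 \<le> \<delta>" using \<delta>0 \<delta>1 by (simp add: power2_eq_square mult_le_cancel_right1)
          then have "real n * B * \<delta>\<^sup>2 / 2 \<le> real n * B * \<delta> / 2" using B0 by (intro divide_right_mono mult_left_mono) auto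
          also have "\<dots> = B / (2 * K1 * real n)" unfolding \<delta>_def using K1 n0 by (simp add: field_simps power2_eq_square)
          also have "\<dots> \<le> 1"
          proof -
            have "K1 * 1 \<le> K1 * (2 * real n)" using K1 n0 by (intro mult_left_mono) auto
            then have "B \<le> 2 * K1 * real n" using K1 by linarith
            then show ?thesis using K1 n0 by (simp add: divide_le_eq)
          qed
          finally show ?thesis .
        qed
        have "-2 \<le> Ln \<mu> h T A A1 \<eta> (X n) n dd (\<beta>s n) \<beta> y"
        proof (rule Ln_lower[where R=R and \<delta>=\<delta> and B=B])
          show "(\<Sum>i<n. \<bar>T (y i) - integral\<^sup>L (obs_dist \<mu> h T A (\<eta> (lin_pred (X n) dd (\<beta>s n) i))) T\<bar>) \<le> R"
            using E(3)[OF y] unfolding ET_def th_def by simp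
          show "\<And>i. i < n \<Longrightarrow> \<bar>\<eta> (lin_pred (X n) dd \<beta> i) - \<eta> (lin_pred (X n) dd (\<beta>s n) i)\<bar> \<le> \<delta>"
            using del unfolding th_def by simp
          show "\<And>i. i < n \<Longrightarrow> A (\<eta> (lin_pred (X n) dd \<beta> i)) - A (\<eta> (lin_pred (X n) dd (\<beta>s n) i))
               - (\<eta> (lin_pred (X n) dd \<beta> i) - \<eta> (lin_pred (X n) dd (\<beta>s n) i)) * A1 (\<eta> (lin_pred (X n) dd (\<beta>s n) i))
               \<le> B * (\<eta> (lin_pred (X n) dd \<beta> i) - \<eta> (lin_pred (X n) dd (\<beta>s n) i))\<^sup>2 / 2"
            using Dt unfolding th_def by simp
          show "0 \<le> B" using B0 by simp
          show "0 \<le> \<delta>" using \<delta>0 by simp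
          show "\<delta> * R \<le> 1" by (rule dR)
          show "real n * B * \<delta>\<^sup>2 / 2 \<le> 1" by (rule nB)
        qed
        then show ?thesis by (intro ennreal_leI) simp
      qed
      have PL: "ennreal (model_weight dd (a n) S * exp (-2) * (\<Prod>j\<in>S. lm * r * exp (- lm * (\<bar>\<beta>s n j\<bar> + r))))
          \<le> prior_integral dd (a n) lm (\<lambda>\<beta>. ennreal (exp (Ln \<mu> h T A A1 \<eta> (X n) n dd (\<beta>s n) \<beta> y)))"
        by (rule prior_lower[OF S_sub lm0 r0 _ hB]) simp_all
      have fa: "exp (-3) * C_norm dd (a n) * real dd powr (- (a n + 6) * real s) * exp (- lm * (\<Sum>j<dd. \<bar>\<beta>s n j\<bar>))
          \<le> model_weight dd (a n) S * exp (-2) * (\<Prod>j\<in>S. lm * r * exp (- lm * (\<bar>\<beta>s n j\<bar> + r)))"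
      proof -
        have NN: "(\<Sum>j<dd. \<bar>\<beta>s n j\<bar>) = (\<Sum>j\<in>S. \<bar>\<beta>s n j\<bar>)"
          using S_sub by (intro sum.mono_neutral_right) (auto simp: S_def)
        have Peq: "(\<Prod>j\<in>S. lm * r * exp (- lm * (\<bar>\<beta>s n j\<bar> + r)))
            = (lm * r) ^ s * exp (- (lm * r * real s)) * exp (- lm * (\<Sum>j\<in>S. \<bar>\<beta>s n j\<bar>))"
          unfolding s_def by (rule prod_split[OF finS])
        have mw: "model_weight dd (a n) S = C_norm dd (a n) / real (dd choose s) * real dd powr (- a n * real s)"
          unfolding model_weight_def s_def ..
        have C0: "0 \<le> C_norm dd (a n)" unfolding C_norm_def by (auto intro!: sum_nonneg)
        have dd1: "1 \<le> real dd" using dd0 by simp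
        have bn0: "0 < real (dd choose s)" using sdd by simp
        have bnle: "real (dd choose s) \<le> real dd ^ s"
          using binomial_le_pow[OF sdd] by (metis of_nat_le_iff of_nat_power)
        have lr: "real dd powr (-5) \<le> lm * r"
        proof -
          have den0: "0 < real dd * L * K1 * (real n)\<^sup>2 * real s" using dd0 L1 K1 n0 s1 by simp
          have a1: "m * M1 M0 / real dd * r \<le> lm * r" using lmlo r0 by (intro mult_right_mono) auto
          have a2: "m * M1 M0 / real dd * r = M1 M0 / (real dd * L * K1 * (real n)\<^sup>2 * real s)"
            unfolding r_def \<delta>_def using mpos L1 K1 n0 s1 dd0 by (simp add: field_simps)
          have a3: "1 / (real dd * L * K1 * (real n)\<^sup>2 * real s) \<le> M1 M0 / (real dd * L * K1 * (real n)\<^sup>2 * real s)"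
            using M1 den0 by (intro divide_right_mono) auto
          have c1: "L * K1 \<le> real dd" using nLK ddr by linarith
          have c2: "(real n)\<^sup>2 \<le> (real dd)\<^sup>2" using ddr by (intro power_mono) auto
          have c3: "real s \<le> real dd" using sn ddr by linarith
          have "real dd * (L * K1) * (real n)\<^sup>2 * real s \<le> real dd * real dd * (real dd)\<^sup>2 * real dd"
            using c1 c2 c3 dd0 L1 K1 by (intro mult_mono) auto
          then have a4: "real dd * L * K1 * (real n)\<^sup>2 * real s \<le> real dd ^ 5"
            by (simp add: power2_eq_square mult.assoc eval_nat_numeral)
          have a5: "real dd powr (-5) = 1 / real dd ^ 5" using dd0 by (simp add: powr_minus divide_inverse)
          have "1 / real dd ^ 5 \<le> 1 / (real dd * L * K1 * (real n)\<^sup>2 * real s)"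
          proof -
            have p5: "0 < real dd ^ 5" using dd0 by simp
            have "0 < real dd ^ 5 * (real dd * L * K1 * (real n)\<^sup>2 * real s)" using p5 den0 by (rule mult_pos_pos)
            then show ?thesis using a4 by (intro divide_left_mono) auto
          qed
          then show ?thesis using a1 a2 a3 a5 by linarith
        qed
        have lrs: "lm * r * real s \<le> 1"
        proof -
          have b1: "lm * r * real s = lm * \<delta> / (L * m)" unfolding r_def using L1 mpos s1 by (simp add: field_simps)
          have b2: "lm * \<delta> / (L * m) \<le> m * M1 M0 * sqrt (ln (real dd)) * \<delta> / (L * m)"
            using lmhi \<delta>0 L1 mpos by (intro divide_right_mono mult_right_mono) auto
          have b3: "m * M1 M0 * sqrt (ln (real dd)) * \<delta> / (L * m) = (M1 M0 / L) * (sqrt (ln (real dd)) * \<delta>)"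
            using mpos L1 by (simp add: field_simps)
          have b4: "M1 M0 / L \<le> 1" using L1 by simp
          have b5: "sqrt (ln (real dd)) \<le> ln (real dd)"
          proof -
            have "ln (real dd) \<le> (ln (real dd))\<^sup>2" using lnd by (simp add: power2_eq_square)
            then have "sqrt (ln (real dd)) \<le> sqrt ((ln (real dd))\<^sup>2)" by (rule real_sqrt_le_mono)
            then show ?thesis using lnd by simp
          qed
          have b6: "sqrt (ln (real dd)) * \<delta> \<le> real n * \<delta>" using b5 lnn \<delta>0 by (intro mult_right_mono) auto
          have b7: "real n * \<delta> \<le> 1"
          proof -
            have "real n * \<delta> = 1 / (K1 * real n)" unfolding \<delta>_def using n0 K1 by (simp add: power2_eq_square)
            also have "\<dots> \<le> 1"
            proof -
              have n1: "1 \<le> real n" using n0 by simp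
              have "1 * 1 \<le> K1 * real n" using K1(1) n1 by (intro mult_mono) auto
              then show ?thesis by simp
            qed
            finally show ?thesis .
          qed
          have "(M1 M0 / L) * (sqrt (ln (real dd)) * \<delta>) \<le> 1 * (sqrt (ln (real dd)) * \<delta>)"
            using b4 \<delta>0 lnd by (intro mult_right_mono) auto
          then show ?thesis using b1 b2 b3 b6 b7 by linarith
        qed
        show ?thesis
          unfolding NN mw by (rule final_arith[OF C0 dd1 lm0 r0 bn0 bnle lr lrs Peq])
      qed
      show ?thesis using order_trans[OF ennreal_leI[OF fa] PL] .
    qed
    show ?case
      unfolding dd_def[symmetric] S_def[symmetric] s_def[symmetric] lm_def[symmetric] unfolding DD
      using E(1) meas main by blast
  qed
qed

theorem theorem1:
  shows "\<exists>c>0. \<forall>(\<mu>::real measure) h T A A1 A2 M0 \<eta>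
            (X :: nat \<Rightarrow> nat \<Rightarrow> nat \<Rightarrow> real) (d :: nat \<Rightarrow> nat) (a :: nat \<Rightarrow> real)
            (lam :: nat \<Rightarrow> real) (b :: nat \<Rightarrow> real) (\<beta>s :: nat \<Rightarrow> nat \<Rightarrow> real).
     expfam_ok \<mu> h T A A1 A2 \<and> clip_ok \<mu> h T A2 M0 \<eta> \<and>
     (\<forall>n. n < d n) \<and>
     (\<forall>n. 0 < a n) \<and>
     (\<forall>n. 0 < lam n \<and> M_AX M0 (X n) n (d n) / real (d n) \<le> lam n \<and>
          lam n \<le> M_AX M0 (X n) n (d n) * sqrt (ln (real (d n)))) \<and>
     (\<forall>n. 0 < b n) \<and> b \<in> o(\<lambda>n. real n / ln (real (d n))) \<and>
     (\<forall>n. \<forall>j\<ge>d n. \<beta>s n j = 0) \<and>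
     (\<forall>n. 0 < card {j. \<beta>s n j \<noteq> 0} \<and> real (card {j. \<beta>s n j \<noteq> 0}) \<le> b n)
     \<longrightarrow>
     (\<forall>\<^sub>F n in sequentially.
        \<exists>E \<in> sets (data_dist \<mu> h T A \<eta> (X n) n (d n) (\<beta>s n)).
          measure (data_dist \<mu> h T A \<eta> (X n) n (d n) (\<beta>s n)) E
            \<ge> 1 - 1 / (real (card {j. \<beta>s n j \<noteq> 0}) * ln (real (d n))) \<and>
          (\<forall>y\<in>E.
             prior_integral (d n) (a n) (lam n)
               (\<lambda>\<beta>. ennreal (exp (Ln \<mu> h T A A1 \<eta> (X n) n (d n) (\<beta>s n) \<beta> y)))
             \<ge> ennreal (c * C_norm (d n) (a n)
                   * real (d n) powr (- (a n + 6) * real (card {j. \<beta>s n j \<noteq> 0}))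
                   * exp (- lam n * (\<Sum>j<d n. \<bar>\<beta>s n j\<bar>)))))"
  apply (rule exI[of _ "exp (-3)"])
  apply (intro conjI allI impI)
   apply simp
  apply (elim conjE)
  apply (rule main_lemma; assumption)
  done


end
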